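(* Let $a,b,c$ be positive integers. For any non-negative integers $m,n$, in $\mathfrak{H}^1$ we have \[d(z_c^mz_bz_a^n)=\sum_{k=0}^m\sum_{l=0}^n(-1)^{k+l}\,z_a^lz_bz_c^k*d(z_c^{m-k})*d(z_a^{n-l}).\]
   Context: $\mathfrak{H}=\mathbb{Q}\langle x,y\rangle$ is the non-commutative polynomial algebra in two indeterminates, and $\mathfrak{H}^1=\mathbb{Q}+\mathfrak{H}y$. Put $z_k=x^{k-1}y$ for $k\geq 1$. Let $\gamma$ be the algebra automorphism of $\mathfrak{H}$ with $\gamma(x)=x$, $\gamma(y)=x+y$, and let $d\colon\mathfrak{H}^1\to\mathfrak{H}^1$ be the $\mathbb{Q}$-linear map with $d(1)=1$ and $d(wy)=\gamma(w)y$ for every word $w\in\mathfrak{H}$. The harmonic product $*$ is the $\mathbb{Q}$-bilinear product on $\mathfrak{H}^1$ defined inductively by $1*w=w*1=w$ and $z_kw*z_lw'=z_k(w*z_lw')+z_l(z_kw*w')+z_{k+l}(w*w')$ for $k,l\geq 1$, $w,w'\in\mathfrak{H}^1$; it is commutative and associative. Powers $z_c^m$ denote concatenation powers (words). *)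

theory Defs
  imports Complex_Main "HOL-Library.Poly_Mapping"
begin

text \<open>The free algebra H = Q<x,y>: finitely supported functions from words
 (lists of letters) to rationals; the monomial of a word w is single w 1.\<close>

datatype letter = X | Y

type_synonym word = "letter list"
type_synonym hpoly = "word \<Rightarrow>\<^sub>0 rat"

definition mon :: "word \<Rightarrow> hpoly" where
  "mon w = Poly_Mapping.single w 1"

definition scal :: "rat \<Rightarrow> hpoly \<Rightarrow> hpoly" where
  "scal c p = Poly_Mapping.map (\<lambda>a. c * a) p"

definition lin :: "(word \<Rightarrow> hpoly) \<Rightarrow> hpoly \<Rightarrow> hpoly" where
  "lin f p = (\<Sum>u\<in>Poly_Mapping.keys p. scal (Poly_Mapping.lookup p u) (f u))"

definition bilin :: "(word \<Rightarrow> word \<Rightarrow> hpoly) \<Rightarrow> hpoly \<Rightarrow> hpoly \<Rightarrow> hpoly" where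
  "bilin f p q = (\<Sum>u\<in>Poly_Mapping.keys p. \<Sum>v\<in>Poly_Mapping.keys q. scal (Poly_Mapping.lookup p u * Poly_Mapping.lookup q v) (f u v))"

definition conc :: "hpoly \<Rightarrow> hpoly \<Rightarrow> hpoly" where
  "conc = bilin (\<lambda>u v. mon (u @ v))"

fun gamma_word :: "word \<Rightarrow> hpoly" where
  "gamma_word [] = mon []"
| "gamma_word (X # w) = conc (mon [X]) (gamma_word w)"
| "gamma_word (Y # w) = conc (mon [X] + mon [Y]) (gamma_word w)"

definition gamma :: "hpoly \<Rightarrow> hpoly" where
  "gamma = lin gamma_word"

text \<open>The map d on H^1: d(1) = 1, d(wy) = gamma(w) y (words not in H^1 are sent
 to 0; they never occur below).\<close>
definition d_word :: "word \<Rightarrow> hpoly" where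
  "d_word w = (if w = [] then mon []
               else if last w = Y then conc (gamma (mon (butlast w))) (mon [Y])
               else 0)"

definition d :: "hpoly \<Rightarrow> hpoly" where
  "d = lin d_word"

text \<open>z_k = x^(k-1) y; a word in H^1 is a sequence of z's, encoded by the
 list of their indices.\<close>
definition zword :: "nat list \<Rightarrow> word" where
  "zword ks = concat (map (\<lambda>k. replicate (k - 1) X @ [Y]) ks)"

fun zdec :: "nat \<Rightarrow> word \<Rightarrow> nat list" where
  "zdec c [] = []"
| "zdec c (X # w) = zdec (Suc c) w"
| "zdec c (Y # w) = Suc c # zdec 0 w"

function hw :: "nat list \<Rightarrow> nat list \<Rightarrow> hpoly" where
  "hw [] v = mon (zword v)"
| "hw (k # u) [] = mon (zword (k # u))"
| "hw (k # u) (l # v) =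
     conc (mon (zword [k])) (hw u (l # v))
   + conc (mon (zword [l])) (hw (k # u) v)
   + conc (mon (zword [k + l])) (hw u v)"
  by pat_completeness auto
termination by (relation "measure (\<lambda>(u, v). length u + length v)") auto

definition harm :: "hpoly \<Rightarrow> hpoly \<Rightarrow> hpoly" (infixl "\<star>" 70) where
  "harm = bilin (\<lambda>u v. hw (zdec 0 u) (zdec 0 v))"

definition Z :: "nat list \<Rightarrow> hpoly" where
  "Z ks = mon (zword ks)"

end

theory Submission
  imports Defs
begin


lemma lookup_scal[simp]: "Poly_Mapping.lookup (scal c p) u = c * Poly_Mapping.lookup p u"
  unfolding scal_def by (simp add: Poly_Mapping.map.rep_eq when_def)

lemma scal_add: "scal c (p + q) = scal c p + scal c q"
  by (rule poly_mapping_eqI) (simp add: lookup_add algebra_simps)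
lemma scal_add_left: "scal (a + b) p = scal a p + scal b p"
  by (rule poly_mapping_eqI) (simp add: lookup_add algebra_simps)
lemma scal_scal[simp]: "scal a (scal b p) = scal (a * b) p"
  by (rule poly_mapping_eqI) simp
lemma scal_one[simp]: "scal 1 p = p"
  by (rule poly_mapping_eqI) simp
lemma scal_zero[simp]: "scal 0 p = 0"
  by (rule poly_mapping_eqI) simp
lemma scal_zero_right[simp]: "scal c 0 = 0"
  by (rule poly_mapping_eqI) simp
lemma scal_uminus: "scal c (- p) = - scal c p"
  by (rule poly_mapping_eqI) simp
lemma scal_m1: "scal (-1) p = - p"
  by (rule poly_mapping_eqI) simp
lemma scal_diff: "scal c (p - q) = scal c p - scal c q"
  by (rule poly_mapping_eqI) (simp add: lookup_minus algebra_simps)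
lemma scal_sum: "scal c (sum f A) = (\<Sum>x\<in>A. scal c (f x))"
  by (induction A rule: infinite_finite_induct) (auto simp: scal_add)

lemma lin_superset:
  assumes "finite S" "Poly_Mapping.keys p \<subseteq> S"
  shows "lin f p = (\<Sum>u\<in>S. scal (Poly_Mapping.lookup p u) (f u))"
  unfolding lin_def
  by (rule sum.mono_neutral_left) (use assms in \<open>auto simp: in_keys_iff\<close>)

lemma lin_add: "lin f (p + q) = lin f p + lin f q"
proof -
  let ?S = "Poly_Mapping.keys p \<union> Poly_Mapping.keys q \<union> Poly_Mapping.keys (p + q)"
  have "lin f (p + q) = (\<Sum>u\<in>?S. scal (Poly_Mapping.lookup (p+q) u) (f u))"
    by (rule lin_superset) auto
  also have "\<dots> = (\<Sum>u\<in>?S. scal (Poly_Mapping.lookup p u) (f u)) + (\<Sum>u\<in>?S. scal (Poly_Mapping.lookup q u) (f u))"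
    by (simp add: lookup_add scal_add_left sum.distrib)
  also have "\<dots> = lin f p + lin f q"
    by (subst (1 2) lin_superset[symmetric]) auto
  finally show ?thesis .
qed

lemma lin_scal: "lin f (scal c p) = scal c (lin f p)"
proof -
  have "lin f (scal c p) = (\<Sum>u\<in>Poly_Mapping.keys p. scal (Poly_Mapping.lookup (scal c p) u) (f u))"
    by (rule lin_superset) (auto simp: in_keys_iff)
  then show ?thesis by (simp add: lin_def scal_sum)
qed

lemma mon_keys[simp]: "Poly_Mapping.keys (mon w) = {w}"
  by (simp add: mon_def)
lemma lookup_mon: "Poly_Mapping.lookup (mon w) u = (if u = w then 1 else 0)"
  by (simp add: mon_def lookup_single when_def)

lemma lin_mon[simp]: "lin f (mon w) = f w"
  by (simp add: lin_def lookup_mon)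

lemma lin_zero[simp]: "lin f 0 = 0"
  by (simp add: lin_def)

lemma lin_fun_add: "lin (\<lambda>u. f u + g u) p = lin f p + lin g p"
  by (simp add: lin_def scal_add sum.distrib)
lemma lin_fun_scal: "lin (\<lambda>u. scal c (f u)) p = scal c (lin f p)"
  by (simp add: lin_def scal_sum mult.commute)
lemma lin_fun_zero[simp]: "lin (\<lambda>u. 0) p = 0"
  by (simp add: lin_def)

lemma expand: "p = (\<Sum>u\<in>Poly_Mapping.keys p. scal (Poly_Mapping.lookup p u) (mon u))"
proof (rule poly_mapping_eqI)
  fix k
  show "Poly_Mapping.lookup p k = Poly_Mapping.lookup (\<Sum>u\<in>Poly_Mapping.keys p. scal (Poly_Mapping.lookup p u) (mon u)) k"
  proof -
    have "(\<Sum>x\<in>Poly_Mapping.keys p. Poly_Mapping.lookup p x * (if k = x then 1 else 0)) = (\<Sum>x\<in>Poly_Mapping.keys p. if k = x then Poly_Mapping.lookup p x else 0)"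
      by (rule sum.cong) auto
    also have "\<dots> = Poly_Mapping.lookup p k"
      by (cases "k \<in> Poly_Mapping.keys p") (simp_all add: in_keys_iff)
    finally show ?thesis by (simp add: lookup_sum lookup_mon)
  qed
qed

definition islin :: "(hpoly \<Rightarrow> hpoly) \<Rightarrow> bool" where
  "islin F \<longleftrightarrow> (\<forall>p q. F (p + q) = F p + F q) \<and> (\<forall>c p. F (scal c p) = scal c (F p))"

lemma islin_zero: assumes "islin F" shows "F 0 = 0"
proof -
  have "F (0 + 0) = F 0 + F 0" using assms unfolding islin_def by blast
  then show ?thesis by simp
qed

lemma islin_sum: "islin F \<Longrightarrow> F (sum g A) = (\<Sum>x\<in>A. F (g x))"
  by (induction A rule: infinite_finite_induct) (auto simp: islin_zero, auto simp: islin_def)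

lemma islin_rep: assumes "islin F" shows "F p = lin (\<lambda>u. F (mon u)) p"
proof -
  have "F p = F (\<Sum>u\<in>Poly_Mapping.keys p. scal (Poly_Mapping.lookup p u) (mon u))"
    by (subst expand) simp
  also have "\<dots> = lin (\<lambda>u. F (mon u)) p"
    using assms by (simp add: islin_sum lin_def, simp add: islin_def)
  finally show ?thesis .
qed

lemma lin_ext: assumes "islin F" "islin G" "\<And>u. F (mon u) = G (mon u)" shows "F p = G p"
proof -
  have "F p = lin (\<lambda>u. F (mon u)) p" by (rule islin_rep[OF assms(1)])
  also have "\<dots> = lin (\<lambda>u. G (mon u)) p" using assms(3) by simp
  also have "\<dots> = G p" by (rule islin_rep[OF assms(2), symmetric])
  finally show ?thesis .
qed

lemma islin_lin[simp]: "islin (lin f)"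
  by (simp add: islin_def lin_add lin_scal)

lemma islin_neg: assumes "islin F" shows "F (- p) = - F p"
proof -
  have "F (scal (-1) p) = scal (-1) (F p)" using assms by (simp add: islin_def)
  then show ?thesis by (simp add: scal_m1)
qed
lemma islin_diff: assumes "islin F" shows "F (p - q) = F p - F q"
proof -
  have "F (p + - q) = F p + F (- q)" using assms unfolding islin_def by blast
  then show ?thesis using islin_neg[OF assms, of q] by simp
qed

lemma bilin_lin: "bilin f p q = lin (\<lambda>u. lin (\<lambda>v. f u v) q) p"
  by (simp add: bilin_def lin_def scal_sum mult.commute)

lemma bilin_lin2: "bilin f p q = lin (\<lambda>v. lin (\<lambda>u. f u v) p) q"
  unfolding bilin_def lin_def scal_sum scal_scal
  by (subst sum.swap) (simp add: mult.commute)

lemma islin_bilin1[simp]: "islin (\<lambda>p. bilin f p q)"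
  unfolding bilin_lin by simp
lemma islin_bilin2[simp]: "islin (\<lambda>q. bilin f p q)"
  unfolding bilin_lin2 by simp
lemma bilin_mon[simp]: "bilin f (mon u) (mon v) = f u v"
  by (simp add: bilin_lin)



lemma islin_comp: "islin F \<Longrightarrow> islin G \<Longrightarrow> islin (\<lambda>p. F (G p))"
  by (simp add: islin_def)
lemma islin_plus: "islin F \<Longrightarrow> islin G \<Longrightarrow> islin (\<lambda>p. F p + G p)"
  by (simp add: islin_def scal_add algebra_simps)
lemma islin_id[simp]: "islin (\<lambda>p. p)"
  by (simp add: islin_def)

lemma conc_mon[simp]: "conc (mon u) (mon v) = mon (u @ v)"
  by (simp add: conc_def)
lemma islin_conc1[simp]: "islin (\<lambda>p. conc p q)"
  by (simp add: conc_def)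
lemma islin_conc2[simp]: "islin (\<lambda>q. conc p q)"
  using islin_bilin2[of "\<lambda>u v. mon (u @ v)" p] by (simp add: conc_def)

lemma conc_add1: "conc (p + q) r = conc p r + conc q r"
  using islin_conc1[of r] unfolding islin_def by blast
lemma conc_add2: "conc r (p + q) = conc r p + conc r q"
  using islin_conc2[of r] unfolding islin_def by blast
lemma conc_scal1: "conc (scal c p) r = scal c (conc p r)"
  using islin_conc1[of r] unfolding islin_def by blast
lemma conc_scal2: "conc r (scal c p) = scal c (conc r p)"
  using islin_conc2[of r] unfolding islin_def by blast
lemma conc_zero1[simp]: "conc 0 r = 0"
  using islin_zero[OF islin_conc1] .
lemma conc_zero2[simp]: "conc r 0 = 0"
  using islin_zero[OF islin_conc2] .
lemma conc_neg2: "conc r (- p) = - conc r p"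
  using islin_neg[OF islin_conc2] .
lemma conc_diff2: "conc r (p - q) = conc r p - conc r q"
  using islin_diff[OF islin_conc2] .

lemma conc_assoc: "conc (conc p q) r = conc p (conc q r)"
proof -
  have A: "conc (mon (u @ v)) r = conc (mon u) (conc (mon v) r)" for u v
    by (rule lin_ext[of "\<lambda>r. conc (mon (u @ v)) r" "\<lambda>r. conc (mon u) (conc (mon v) r)"])
       (auto intro: islin_comp)
  have B: "conc (conc (mon u) q) r = conc (mon u) (conc q r)" for u
    by (rule lin_ext[of "\<lambda>q. conc (conc (mon u) q) r" "\<lambda>q. conc (mon u) (conc q r)"])
       (auto intro: islin_comp simp: A)
  show ?thesis
    by (rule lin_ext[of "\<lambda>p. conc (conc p q) r" "\<lambda>p. conc p (conc q r)"])
       (auto intro: islin_comp simp: B)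
qed

lemma mon_conc_mon: "conc (mon u) (conc (mon v) p) = conc (mon (u @ v)) p"
  by (simp add: conc_assoc[symmetric])

lemma conc_Nil[simp]: "conc (mon []) p = p"
  by (rule lin_ext[of "\<lambda>p. conc (mon []) p" "\<lambda>p. p"]) auto
lemma conc_Nil2[simp]: "conc p (mon []) = p"
  by (rule lin_ext[of "\<lambda>p. conc p (mon [])" "\<lambda>p. p"]) auto

lemma conc_sum2: "conc r (sum f A) = (\<Sum>x\<in>A. conc r (f x))"
  using islin_sum[OF islin_conc2] .

abbreviation pos :: "nat list \<Rightarrow> bool" where "pos ks \<equiv> (\<forall>k\<in>set ks. 0 < k)"

lemma zword_Nil[simp]: "zword [] = []" by (simp add: zword_def)
lemma zword_Cons[simp]: "zword (k # ks) = replicate (k - 1) X @ Y # zword ks"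
  by (simp add: zword_def)
lemma zword_append[simp]: "zword (u @ v) = zword u @ zword v"
  by (simp add: zword_def)

lemma zdec_rep: "zdec c (replicate j X @ w) = zdec (c + j) w"
  by (induction j arbitrary: c) auto

lemma zdec_zword: "pos ks \<Longrightarrow> zdec 0 (zword ks) = ks"
  by (induction ks) (auto simp: zdec_rep)

lemma zdec_zword_app: "0 < k \<Longrightarrow> zdec 0 (zword [k] @ w) = k # zdec 0 w"
  by (simp add: zdec_rep)

lemma zdec_pos: "pos (zdec c w)"
  by (induction c w rule: zdec.induct) auto

lemma zdec_zdec: "zdec 0 (zword (zdec 0 w)) = zdec 0 w"
  by (simp add: zdec_zword zdec_pos)

lemma zdec_Nil: "zdec c w = [] \<Longrightarrow> Y \<notin> set w"
  by (induction c w rule: zdec.induct) auto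

lemma zdec_Nil_rep: "zdec c w = [] \<Longrightarrow> w = replicate (length w) X"
proof (induction c w rule: zdec.induct)
  case (2 c w) then show ?case by simp
qed auto

lemma zdec_Cons: "zdec c w = l # v \<Longrightarrow> c < l \<and> (\<exists>w'. w = replicate (l - 1 - c) X @ Y # w' \<and> zdec 0 w' = v)"
proof (induction c w arbitrary: l v rule: zdec.induct)
  case (2 c w)
  then have "Suc c < l" "\<exists>w'. w = replicate (l - 1 - Suc c) X @ Y # w' \<and> zdec 0 w' = v" by auto
  then show ?case
    by (metis Suc_diff_Suc Suc_lessD append_Cons diff_Suc_eq_diff_pred replicate_Suc)
qed auto

lemma zdec_Cons0: "zdec 0 w = l # v \<Longrightarrow> 0 < l \<and> (\<exists>w'. w = zword [l] @ w' \<and> zdec 0 w' = v)"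
  using zdec_Cons[of 0 w l v] by auto

lemma harm_mon[simp]: "mon u \<star> mon v = hw (zdec 0 u) (zdec 0 v)"
  by (simp add: harm_def)
lemma islin_harm1[simp]: "islin (\<lambda>p. p \<star> q)"
  by (simp add: harm_def)
lemma islin_harm2[simp]: "islin (\<lambda>q. p \<star> q)"
  using islin_bilin2[of "\<lambda>u v. hw (zdec 0 u) (zdec 0 v)" p] by (simp add: harm_def)

lemma harm_add1: "(p + q) \<star> r = p \<star> r + q \<star> r"
  using islin_harm1[of r] unfolding islin_def by blast
lemma harm_add2: "r \<star> (p + q) = r \<star> p + r \<star> q"
  using islin_harm2[of r] unfolding islin_def by blast
lemma harm_scal1: "(scal c p) \<star> r = scal c (p \<star> r)"
  using islin_harm1[of r] unfolding islin_def by blast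
lemma harm_scal2: "r \<star> (scal c p) = scal c (r \<star> p)"
  using islin_harm2[of r] unfolding islin_def by blast
lemma harm_zero1[simp]: "0 \<star> r = 0"
  using islin_zero[OF islin_harm1] .
lemma harm_zero2[simp]: "r \<star> 0 = 0"
  using islin_zero[OF islin_harm2] .
lemma harm_neg1: "(- p) \<star> r = - (p \<star> r)"
  using islin_neg[OF islin_harm1] .
lemma harm_neg2: "r \<star> (- p) = - (r \<star> p)"
  using islin_neg[OF islin_harm2] .
lemma harm_sum1: "(sum f A) \<star> r = (\<Sum>x\<in>A. f x \<star> r)"
  using islin_sum[OF islin_harm1] .
lemma harm_sum2: "r \<star> (sum f A) = (\<Sum>x\<in>A. r \<star> f x)"
  using islin_sum[OF islin_harm2] .

lemma Z_harm_mon: "pos u \<Longrightarrow> Z u \<star> mon w = hw u (zdec 0 w)"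
  by (simp add: Z_def zdec_zword)
lemma mon_harm_Z: "pos u \<Longrightarrow> mon w \<star> Z u = hw (zdec 0 w) u"
  by (simp add: Z_def zdec_zword)
lemma Z_harm_Z: "pos u \<Longrightarrow> pos v \<Longrightarrow> Z u \<star> Z v = hw u v"
  by (simp add: Z_def zdec_zword)

lemma hw_Nil2[simp]: "hw u [] = Z u"
  by (cases u) (auto simp: Z_def)
lemma hw_Nil1[simp]: "hw [] v = Z v"
  by (simp add: Z_def)

lemma hw_comm: "hw u v = hw v u"
  by (induction u v rule: hw.induct) (auto simp: add.commute add.left_commute Z_def)

lemma harm_comm: "p \<star> q = q \<star> p"
proof -
  have A: "mon u \<star> q = q \<star> mon u" for u
    by (rule lin_ext[of "\<lambda>q. mon u \<star> q" "\<lambda>q. q \<star> mon u"]) (auto simp: hw_comm)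
  show ?thesis
    by (rule lin_ext[of "\<lambda>p. p \<star> q" "\<lambda>p. q \<star> p"]) (auto simp: A)
qed



definition nrm :: "hpoly \<Rightarrow> hpoly" where "nrm = lin (\<lambda>w. Z (zdec 0 w))"

lemma islin_nrm[simp]: "islin nrm" by (simp add: nrm_def)
lemma nrm_add: "nrm (p + q) = nrm p + nrm q" using islin_nrm unfolding islin_def by blast
lemma nrm_mon[simp]: "nrm (mon w) = Z (zdec 0 w)" by (simp add: nrm_def)
lemma nrm_Z: "pos u \<Longrightarrow> nrm (Z u) = Z u" by (simp add: Z_def zdec_zword)

lemma Z_Cons_conc: "Z (k # u) = conc (Z [k]) (Z u)"
  by (simp add: Z_def)

lemma nrm_conc: assumes "0 < k" shows "nrm (conc (Z [k]) p) = conc (Z [k]) (nrm p)"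
  by (rule lin_ext[of "\<lambda>p. nrm (conc (Z [k]) p)" "\<lambda>p. conc (Z [k]) (nrm p)"])
     (use assms in \<open>auto intro: islin_comp simp: Z_def zdec_rep\<close>)

lemma hw_Cons: "hw (k # u) (l # v) =
     conc (Z [k]) (hw u (l # v)) + conc (Z [l]) (hw (k # u) v) + conc (Z [k + l]) (hw u v)"
  by (simp only: hw.simps Z_def)

lemma hw_Nil1': "hw [] v = Z v" by (simp add: Z_def)

lemma nrm_hw: "pos u \<Longrightarrow> pos v \<Longrightarrow> nrm (hw u v) = hw u v"
  by (induction u v rule: hw.induct) (simp_all del: hw.simps add: hw_Cons hw_Nil1' nrm_Z nrm_add nrm_conc)

lemma harm_Nil_left: "Z [] \<star> p = nrm p"
  by (rule lin_ext[of "\<lambda>p. Z [] \<star> p" nrm]) (auto simp: Z_def)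

lemma nrm_harm: "nrm (p \<star> q) = p \<star> q"
proof -
  have A: "nrm (mon u \<star> q) = mon u \<star> q" for u
    by (rule lin_ext[of "\<lambda>q. nrm (mon u \<star> q)" "\<lambda>q. mon u \<star> q"])
       (auto intro: islin_comp simp: nrm_hw zdec_pos)
  show ?thesis
    by (rule lin_ext[of "\<lambda>p. nrm (p \<star> q)" "\<lambda>p. p \<star> q"]) (auto intro: islin_comp simp: A)
qed

lemma harm_Nil_harm: "Z [] \<star> (p \<star> q) = p \<star> q"
  by (simp add: harm_Nil_left nrm_harm)

lemma islin_harm_conc1[simp]: "islin (\<lambda>P. conc r P \<star> q)"
  by (rule islin_comp[OF islin_harm1 islin_conc2])
lemma islin_harm_conc2[simp]: "islin (\<lambda>P. q \<star> conc r P)"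
  by (rule islin_comp[OF islin_harm2 islin_conc2])
lemma islin_conc_harm1[simp]: "islin (\<lambda>P. conc r (P \<star> q))"
  by (rule islin_comp[OF islin_conc2 islin_harm1])
lemma islin_conc_harm2[simp]: "islin (\<lambda>P. conc r (q \<star> P))"
  by (rule islin_comp[OF islin_conc2 islin_harm2])
lemma islin_conc_harm_conc1[simp]: "islin (\<lambda>P. conc r (conc s P \<star> q))"
  by (rule islin_comp[OF islin_conc2 islin_harm_conc1])
lemma islin_conc_harm_conc2[simp]: "islin (\<lambda>P. conc r (q \<star> conc s P))"
  by (rule islin_comp[OF islin_conc2 islin_harm_conc2])

lemma harm_rec1:
  assumes "0 < k" "0 < l" "pos w"
  shows "conc (Z [k]) P \<star> Z (l # w) = conc (Z [k]) (P \<star> Z (l # w)) + conc (Z [l]) (conc (Z [k]) P \<star> Z w) + conc (Z [k + l]) (P \<star> Z w)"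
  by (rule lin_ext[of "\<lambda>P. conc (Z [k]) P \<star> Z (l # w)" "\<lambda>P. conc (Z [k]) (P \<star> Z (l # w)) + conc (Z [l]) (conc (Z [k]) P \<star> Z w) + conc (Z [k + l]) (P \<star> Z w)"])
     (use assms in \<open>auto intro!: islin_plus simp: Z_def zdec_rep zdec_zword\<close>)

lemma harm_rec2:
  assumes "0 < k" "0 < l" "pos u"
  shows "Z (k # u) \<star> conc (Z [l]) P = conc (Z [k]) (Z u \<star> conc (Z [l]) P) + conc (Z [l]) (Z (k # u) \<star> P) + conc (Z [k + l]) (Z u \<star> P)"
  by (rule lin_ext[of "\<lambda>P. Z (k # u) \<star> conc (Z [l]) P" "\<lambda>P. conc (Z [k]) (Z u \<star> conc (Z [l]) P) + conc (Z [l]) (Z (k # u) \<star> P) + conc (Z [k + l]) (Z u \<star> P)"])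
     (use assms in \<open>auto intro!: islin_plus simp: Z_def zdec_rep zdec_zword\<close>)



lemma hw_assoc_aux:
  "pos u \<Longrightarrow> pos v \<Longrightarrow> pos w \<Longrightarrow> hw u v \<star> Z w = Z u \<star> hw v w"
proof (induction "length u + length v + length w" arbitrary: u v w rule: less_induct)
  case less
  show ?case
  proof (cases "u = [] \<or> v = [] \<or> w = []")
    case True
    then show ?thesis
    proof (elim disjE)
      assume "u = []"
      then show ?thesis using less.prems
        by (simp del: hw.simps add: hw_Nil1' Z_harm_Z harm_Nil_left nrm_hw)
    next
      assume "v = []"
      then show ?thesis using less.prems
        by (simp del: hw.simps add: hw_Nil1')
    next
      assume "w = []"
      then show ?thesis using less.prems
        by (simp del: hw.simps add: hw_Nil1' Z_harm_Z harm_Nil_left nrm_hw harm_comm[of _ "Z []"])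
    qed
  next
    case False
    then obtain i u' j v' k w' where uvw: "u = i # u'" "v = j # v'" "w = k # w'"
      by (meson list.exhaust)
    have p: "0 < i" "0 < j" "0 < k" "pos u'" "pos v'" "pos w'"
      using less.prems uvw by auto
    have pc: "pos (i # u')" "pos (j # v')" "pos (k # w')" using p by auto
    note IH = less.hyps
    have I1: "hw u' (j # v') \<star> Z (k # w') = Z u' \<star> hw (j # v') (k # w')"
      by (rule IH) (use uvw p pc in auto)
    have I2: "hw (i # u') (j # v') \<star> Z w' = Z (i # u') \<star> hw (j # v') w'"
      by (rule IH) (use uvw p pc in auto)
    have I3: "hw u' (j # v') \<star> Z w' = Z u' \<star> hw (j # v') w'"
      by (rule IH) (use uvw p pc in auto)
    have I4: "hw (i # u') v' \<star> Z (k # w') = Z (i # u') \<star> hw v' (k # w')"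
      by (rule IH) (use uvw p pc in auto)
    have I5: "hw (i # u') v' \<star> Z w' = Z (i # u') \<star> hw v' w'"
      by (rule IH) (use uvw p pc in auto)
    have I6: "hw u' v' \<star> Z (k # w') = Z u' \<star> hw v' (k # w')"
      by (rule IH) (use uvw p pc in auto)
    have I7: "hw u' v' \<star> Z w' = Z u' \<star> hw v' w'"
      by (rule IH) (use uvw p pc in auto)
    have "hw u v \<star> Z w =
        conc (Z [i]) (hw u' (j # v') \<star> Z (k # w')) + conc (Z [i + k]) (hw u' (j # v') \<star> Z w')
      + conc (Z [j]) (hw (i # u') v' \<star> Z (k # w')) + conc (Z [j + k]) (hw (i # u') v' \<star> Z w')
      + conc (Z [i + j]) (hw u' v' \<star> Z (k # w')) + conc (Z [i + j + k]) (hw u' v' \<star> Z w')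
      + (conc (Z [k]) (conc (Z [i]) (hw u' (j # v')) \<star> Z w') + conc (Z [k]) (conc (Z [j]) (hw (i # u') v') \<star> Z w') + conc (Z [k]) (conc (Z [i + j]) (hw u' v') \<star> Z w'))"
      unfolding uvw hw_Cons harm_add1
      by (simp only: harm_rec1[OF _ _ p(6)] p add_pos_pos add_ac)
    also have "\<dots> =
        conc (Z [i]) (hw u' (j # v') \<star> Z (k # w')) + conc (Z [i + k]) (hw u' (j # v') \<star> Z w')
      + conc (Z [j]) (hw (i # u') v' \<star> Z (k # w')) + conc (Z [j + k]) (hw (i # u') v' \<star> Z w')
      + conc (Z [i + j]) (hw u' v' \<star> Z (k # w')) + conc (Z [i + j + k]) (hw u' v' \<star> Z w')
      + conc (Z [k]) (hw (i # u') (j # v') \<star> Z w')"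
      by (simp only: hw_Cons harm_add1 conc_add2)
    also have "\<dots> =
        conc (Z [i]) (Z u' \<star> hw (j # v') (k # w')) + conc (Z [i + k]) (Z u' \<star> hw (j # v') w')
      + conc (Z [j]) (Z (i # u') \<star> hw v' (k # w')) + conc (Z [j + k]) (Z (i # u') \<star> hw v' w')
      + conc (Z [i + j]) (Z u' \<star> hw v' (k # w')) + conc (Z [i + j + k]) (Z u' \<star> hw v' w')
      + conc (Z [k]) (Z (i # u') \<star> hw (j # v') w')"
      by (simp only: I1 I2 I3 I4 I5 I6 I7)
    also have "\<dots> = 
        conc (Z [j]) (Z (i # u') \<star> hw v' (k # w')) + conc (Z [i + j]) (Z u' \<star> hw v' (k # w'))
      + conc (Z [k]) (Z (i # u') \<star> hw (j # v') w') + conc (Z [i + k]) (Z u' \<star> hw (j # v') w')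
      + conc (Z [j + k]) (Z (i # u') \<star> hw v' w') + conc (Z [i + (j + k)]) (Z u' \<star> hw v' w')
      + conc (Z [i]) (Z u' \<star> hw (j # v') (k # w'))"
      by (simp only: add_ac)
    also have "\<dots> =
        conc (Z [j]) (Z (i # u') \<star> hw v' (k # w')) + conc (Z [i + j]) (Z u' \<star> hw v' (k # w'))
      + conc (Z [k]) (Z (i # u') \<star> hw (j # v') w') + conc (Z [i + k]) (Z u' \<star> hw (j # v') w')
      + conc (Z [j + k]) (Z (i # u') \<star> hw v' w') + conc (Z [i + (j + k)]) (Z u' \<star> hw v' w')
      + (conc (Z [i]) (Z u' \<star> conc (Z [j]) (hw v' (k # w'))) + conc (Z [i]) (Z u' \<star> conc (Z [k]) (hw (j # v') w')) + conc (Z [i]) (Z u' \<star> conc (Z [j + k]) (hw v' w')))"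
      by (simp only: hw_Cons harm_add2 conc_add2)
    also have "\<dots> = Z u \<star> hw v w"
      unfolding uvw hw_Cons harm_add2
      by (simp only: harm_rec2[OF _ _ p(4)] p add_pos_pos add_ac)
    finally show ?thesis .
  qed
qed

lemma harm_mon_right: "p \<star> mon z = p \<star> Z (zdec 0 z)"
  by (rule lin_ext[of "\<lambda>p. p \<star> mon z" "\<lambda>p. p \<star> Z (zdec 0 z)"]) (auto simp: Z_def zdec_zdec)

lemma harm_assoc: "(p \<star> q) \<star> r = p \<star> (q \<star> r)"
proof -
  have A: "(mon x \<star> mon y) \<star> mon z = mon x \<star> (mon y \<star> mon z)" for x y z
  proof -
    have "(mon x \<star> mon y) \<star> mon z = (mon x \<star> mon y) \<star> Z (zdec 0 z)"
      by (rule harm_mon_right)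
    also have "\<dots> = hw (zdec 0 x) (zdec 0 y) \<star> Z (zdec 0 z)"
      by (simp only: harm_mon)
    also have "\<dots> = Z (zdec 0 x) \<star> hw (zdec 0 y) (zdec 0 z)"
      by (rule hw_assoc_aux) (auto simp: zdec_pos)
    also have "\<dots> = mon x \<star> (mon y \<star> mon z)"
      by (subst (2) harm_comm, subst harm_mon_right, subst harm_comm) (simp del: hw.simps)
    finally show ?thesis .
  qed
  have B: "(mon x \<star> mon y) \<star> r = mon x \<star> (mon y \<star> r)" for x y
    by (rule lin_ext[of "\<lambda>r. (mon x \<star> mon y) \<star> r" "\<lambda>r. mon x \<star> (mon y \<star> r)"])
       (auto intro: islin_comp simp: A simp del: harm_mon)
  have C: "(mon x \<star> q) \<star> r = mon x \<star> (q \<star> r)" for x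
    by (rule lin_ext[of "\<lambda>q. (mon x \<star> q) \<star> r" "\<lambda>q. mon x \<star> (q \<star> r)"])
       (auto intro: islin_comp simp: B simp del: harm_mon)
  show ?thesis
    by (rule lin_ext[of "\<lambda>p. (p \<star> q) \<star> r" "\<lambda>p. p \<star> (q \<star> r)"])
       (auto intro: islin_comp simp: C simp del: harm_mon)
qed



lemma gamma_word_rep: "gamma_word (replicate j X @ w) = conc (mon (replicate j X)) (gamma_word w)"
  by (induction j) (auto simp: mon_conc_mon)

lemma gamma_mon[simp]: "gamma (mon w) = gamma_word w" by (simp add: gamma_def)
lemma d_mon[simp]: "d (mon w) = d_word w" by (simp add: d_def)
lemma islin_d[simp]: "islin d" by (simp add: d_def)

lemma d_Nil: "d (Z []) = Z []" by (simp add: Z_def d_word_def)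

lemma zword_ne: "u \<noteq> [] \<Longrightarrow> zword u \<noteq> []"
  by (cases u) auto

lemma last_zword: "u \<noteq> [] \<Longrightarrow> last (zword u) = Y"
proof (induction u)
  case (Cons a u')
  then show ?case by (cases "u' = []") (auto simp: zword_ne)
qed simp

lemma gamma_word_rep0: "gamma_word (replicate j X) = mon (replicate j X)"
  using gamma_word_rep[of j "[]"] by simp

lemma rep_aux: "0 < l \<Longrightarrow> replicate c X @ replicate (l - Suc 0) X @ w = replicate (c + l - Suc 0) X @ w"
proof -
  assume "0 < l"
  then have e: "c + l - Suc 0 = c + (l - Suc 0)" by arith
  show ?thesis by (simp only: e replicate_add append_assoc)
qed

lemma d_Z: "u \<noteq> [] \<Longrightarrow> d (Z u) = conc (gamma_word (butlast (zword u))) (mon [Y])"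
  by (simp add: Z_def d_word_def zword_ne last_zword)

lemma d_single: "0 < c \<Longrightarrow> d (Z [c]) = Z [c]"
proof -
  assume c: "0 < c"
  have "d (Z [c]) = conc (gamma_word (butlast (zword [c]))) (mon [Y])" by (rule d_Z) simp
  also have "\<dots> = conc (gamma_word (replicate (c - 1) X)) (mon [Y])" by simp
  finally show ?thesis by (simp add: gamma_word_rep0 Z_def)
qed

lemma rep_X_Suc: "0 < c \<Longrightarrow> replicate (c - Suc 0) X @ [X] = replicate c X"
  by (metis Suc_pred replicate_Suc replicate_append_same)

lemma d_cons: assumes "0 < c" "u \<noteq> []"
  shows "d (Z (c # u)) = conc (Z [c]) (d (Z u)) + conc (mon (replicate c X)) (d (Z u))"
proof -
  let ?G = "gamma_word (butlast (zword u))"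
  have bl: "butlast (zword (c # u)) = replicate (c - 1) X @ Y # butlast (zword u)"
    using zword_ne[OF assms(2)] by (simp add: butlast_append)
  have "d (Z (c # u)) = conc (gamma_word (butlast (zword (c # u)))) (mon [Y])" by (rule d_Z) simp
  also have "\<dots> = conc (conc (mon (replicate (c - 1) X)) (conc (mon [X] + mon [Y]) ?G)) (mon [Y])"
    by (simp only: bl gamma_word_rep gamma_word.simps)
  also have "\<dots> = conc (mon (replicate (c - 1) X @ [X])) (d (Z u)) + conc (mon (replicate (c - 1) X @ [Y])) (d (Z u))"
    by (simp only: conc_assoc conc_add1 conc_add2 mon_conc_mon d_Z[OF assms(2)])
  also have "\<dots> = conc (Z [c]) (d (Z u)) + conc (mon (replicate c X)) (d (Z u))"
    using assms(1) by (simp add: rep_X_Suc Z_def)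
  finally show ?thesis .
qed

lemma Z_xconc: "0 < l \<Longrightarrow> conc (mon (replicate c X)) (Z (l # u)) = Z ((c + l) # u)"
  by (simp add: Z_def rep_aux)

lemma xconc_Zconc: "0 < l \<Longrightarrow> conc (mon (replicate c X)) (conc (Z [l]) P) = conc (Z [c + l]) P"
  by (simp add: Z_def mon_conc_mon rep_aux)

lemma d_rec2: assumes "0 < c" "0 < l" "pos u"
  shows "d (Z (c # l # u)) = conc (Z [c]) (d (Z (l # u))) + d (Z ((c + l) # u))"
proof (cases "u = []")
  case True
  then show ?thesis using assms
    by (simp add: d_cons d_single Z_xconc)
next
  case False
  then show ?thesis using assms
    by (simp add: d_cons conc_add2 xconc_Zconc mon_conc_mon replicate_add[symmetric])
qed

lemma nrm_d: "pos u \<Longrightarrow> nrm (d (Z u)) = d (Z u)"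
proof (induction "length u" arbitrary: u rule: less_induct)
  case less
  show ?case
  proof (cases u)
    case Nil then show ?thesis by (simp add: d_Nil nrm_Z)
  next
    case (Cons c u')
    show ?thesis
    proof (cases u')
      case Nil then show ?thesis using Cons less.prems by (simp add: d_single nrm_Z)
    next
      case (Cons l u'')
      then show ?thesis using \<open>u = c # u'\<close> less.prems less.hyps
        by (simp add: d_rec2 nrm_add nrm_conc)
    qed
  qed
qed



definition phiw :: "hpoly \<Rightarrow> word \<Rightarrow> hpoly" where
  "phiw Q w = (case dropWhile (\<lambda>l. l = X) w of [] \<Rightarrow> 0
      | _ # r \<Rightarrow> conc (mon (takeWhile (\<lambda>l. l = X) w @ [Y])) (Q \<star> mon r))"

definition phi :: "hpoly \<Rightarrow> hpoly \<Rightarrow> hpoly" where "phi Q = lin (phiw Q)"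

lemma islin_phi[simp]: "islin (phi Q)" by (simp add: phi_def)
lemma phi_add: "phi Q (p + q) = phi Q p + phi Q q" using islin_phi unfolding islin_def by blast
lemma phi_scal: "phi Q (scal c p) = scal c (phi Q p)" using islin_phi unfolding islin_def by blast

lemma dropWhile_rep: "dropWhile (\<lambda>l. l = X) (replicate n X @ w) = dropWhile (\<lambda>l. l = X) w"
  by (induction n) auto
lemma takeWhile_rep: "takeWhile (\<lambda>l. l = X) (replicate n X @ w) = replicate n X @ takeWhile (\<lambda>l. l = X) w"
  by (induction n) auto

lemma phi_rep[simp]: "phi Q (mon (replicate n X)) = 0"
  using dropWhile_rep[of n "[]"] by (simp add: phi_def phiw_def)

lemma phi_conc: assumes "0 < j" shows "phi Q (conc (Z [j]) P) = conc (Z [j]) (Q \<star> P)"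
  by (rule lin_ext[of "\<lambda>P. phi Q (conc (Z [j]) P)" "\<lambda>P. conc (Z [j]) (Q \<star> P)"])
     (auto intro: islin_comp simp: phi_def phiw_def Z_def dropWhile_rep takeWhile_rep)

definition nu :: "nat \<Rightarrow> hpoly \<Rightarrow> hpoly" where
  "nu c P = conc (Z [c]) P + conc (mon (replicate c X)) P"

lemma islin_nu[simp]: "islin (nu c)"
  unfolding nu_def by (intro islin_plus) simp_all

lemma G_rule: assumes "0 < c" "pos W"
  shows "Z (c # W) \<star> P = phi (Z W) (nu c P) + phi (Z (c # W)) P"
proof (rule lin_ext[of "\<lambda>P. Z (c # W) \<star> P" "\<lambda>P. phi (Z W) (nu c P) + phi (Z (c # W)) P"])
  show "islin (\<lambda>P. phi (Z W) (nu c P) + phi (Z (c # W)) P)"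
    by (rule islin_plus[OF islin_comp[OF islin_phi islin_nu] islin_phi])
next
  fix w
  have pW: "pos (c # W)" using assms by auto
  show "Z (c # W) \<star> mon w = phi (Z W) (nu c (mon w)) + phi (Z (c # W)) (mon w)"
  proof (cases "zdec 0 w")
    case Nil
    define n where "n = length w"
    have w: "w = replicate n X" unfolding n_def using Nil by (rule zdec_Nil_rep)
    have L: "Z (c # W) \<star> mon w = Z (c # W)"
      using pW Nil by (simp only: Z_harm_mon hw_Nil2)
    have R1: "phi (Z W) (conc (Z [c]) (mon w)) = Z (c # W)"
      using assms Nil by (simp only: phi_conc Z_harm_mon hw_Nil2 Z_Cons_conc[symmetric])
    have R2: "phi (Z W) (conc (mon (replicate c X)) (mon w)) = 0"
      unfolding w conc_mon replicate_add[symmetric] by (rule phi_rep)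
    have R3: "phi (Z (c # W)) (mon w) = 0"
      unfolding w by (rule phi_rep)
    show ?thesis unfolding nu_def phi_add L R1 R2 R3 by simp
  next
    case (Cons l v)
    from zdec_Cons0[OF this] obtain w' where l: "0 < l" and w: "w = zword [l] @ w'"
      by blast
    have mw: "mon w = conc (Z [l]) (mon w')" by (simp add: w Z_def)
    have "Z (c # W) \<star> mon w = conc (Z [c]) (Z W \<star> conc (Z [l]) (mon w')) + conc (Z [l]) (Z (c # W) \<star> mon w') + conc (Z [c + l]) (Z W \<star> mon w')"
      unfolding mw by (rule harm_rec2[OF assms(1) l assms(2)])
    also have "\<dots> = phi (Z W) (nu c (mon w)) + phi (Z (c # W)) (mon w)"
      unfolding mw nu_def phi_add xconc_Zconc[OF l]
      by (simp only: phi_conc assms(1) l add_pos_pos add_ac)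
    finally show ?thesis .
  qed
qed (simp_all)



lemma scal_uminus_left: "scal (- a) pp = - scal a pp"
  by (rule poly_mapping_eqI) simp

lemma scal_Suc: "scal ((-1) ^ Suc M) pp = - scal ((-1) ^ M) pp"
proof -
  have "scal ((-1) ^ Suc M) pp = scal (-1) (scal ((-1) ^ M) pp)" by simp
  then show ?thesis by (simp only: scal_m1)
qed

lemma Zc_conc: "conc (Z [c]) (Z []) = Z [c]" by (simp add: Z_def)

lemma phi_Zc: "0 < c \<Longrightarrow> phi Q (Z [c]) = conc (Z [c]) (Q \<star> Z [])"
  using phi_conc[of c Q "Z []"] by (simp only: Zc_conc)

lemma dphi: assumes "0 < c" "pos u" shows "phi Q (d (Z (c # u))) = phi Q (nu c (d (Z u)))"
proof (cases "u = []")
  case True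
  have "nu c (d (Z u)) = Z [c] + mon (replicate c X)"
    by (simp add: True d_Nil nu_def) (simp add: Z_def)
  then show ?thesis using assms True by (simp add: phi_add d_single)
next
  case False
  then show ?thesis using assms by (simp add: d_cons nu_def)
qed

lemma phi_Nil_left: "pos u \<Longrightarrow> u \<noteq> [] \<Longrightarrow> phi (Z []) (d (Z u)) = d (Z u)"
proof (induction "length u" arbitrary: u rule: less_induct)
  case less
  then obtain c u' where u: "u = c # u'" by (meson list.exhaust)
  show ?case
  proof (cases u')
    case Nil
    have "phi (Z []) (conc (Z [c]) (Z [])) = conc (Z [c]) (Z [])"
      using less.prems u by (simp add: phi_conc harm_Nil_left nrm_Z)
    then have "phi (Z []) (Z [c]) = Z [c]" by (simp only: Zc_conc)
    then show ?thesis using less.prems u Nil by (simp add: d_single)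
  next
    case (Cons l u'')
    have IH: "phi (Z []) (d (Z ((c + l) # u''))) = d (Z ((c + l) # u''))"
      by (rule less.hyps) (use less.prems u Cons in auto)
    show ?thesis using less.prems u Cons IH
      by (simp add: d_rec2 phi_add phi_conc harm_Nil_left nrm_d)
  qed
qed

lemma rep_shift: "k \<le> M \<Longrightarrow> replicate (Suc M - k) c @ u = replicate (M - k) c @ (c # u)"
  by (simp add: Suc_diff_le replicate_app_Cons_same)

lemma lemL:
  assumes "0 < c" "pos u" "u \<noteq> []"
  shows "(\<Sum>k\<le>M. scal ((-1) ^ k) (Z (replicate k c) \<star> d (Z (replicate (M - k) c @ u))))
       = scal ((-1) ^ M) (phi (Z (replicate M c)) (d (Z u)))"
  using assms(2,3)
proof (induction M arbitrary: u)
  case 0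
  then show ?case by (simp add: harm_Nil_left nrm_d phi_Nil_left)
next
  case (Suc M)
  have pcu: "pos (c # u)" using Suc.prems assms(1) by auto
  have "(\<Sum>k\<le>M. scal ((-1) ^ k) (Z (replicate k c) \<star> d (Z (replicate (Suc M - k) c @ u))))
      = (\<Sum>k\<le>M. scal ((-1) ^ k) (Z (replicate k c) \<star> d (Z (replicate (M - k) c @ (c # u)))))"
    by (rule sum.cong) (simp_all add: rep_shift)
  also have "\<dots> = scal ((-1) ^ M) (phi (Z (replicate M c)) (d (Z (c # u))))"
    using Suc.IH[OF pcu] by simp
  also have "\<dots> = scal ((-1) ^ M) (phi (Z (replicate M c)) (nu c (d (Z u))))"
    using assms(1) Suc.prems by (simp add: dphi)
  finally have S: "(\<Sum>k\<le>M. scal ((-1) ^ k) (Z (replicate k c) \<star> d (Z (replicate (Suc M - k) c @ u))))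
      = scal ((-1) ^ M) (phi (Z (replicate M c)) (nu c (d (Z u))))" .
  have G: "Z (replicate (Suc M) c) \<star> d (Z u) = phi (Z (replicate M c)) (nu c (d (Z u))) + phi (Z (replicate (Suc M) c)) (d (Z u))"
    using G_rule[OF assms(1), of "replicate M c" "d (Z u)"] assms(1) by simp
  have f: "Suc M - Suc M = 0" by simp
  show ?case
    unfolding sum.atMost_Suc S f replicate_0 append_Nil G scal_Suc scal_add
    by (simp add: algebra_simps)
qed

lemma F1:
  assumes "0 < c"
  shows "(\<Sum>k\<le>M. scal ((-1) ^ k) (Z (replicate k c) \<star> d (Z (replicate (M - k) c))))
       = (if M = 0 then Z [] else 0)"
proof (cases M)
  case 0
  then show ?thesis by (simp add: d_Nil harm_Nil_left nrm_Z)
next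
  case (Suc M')
  have "(\<Sum>k\<le>M'. scal ((-1) ^ k) (Z (replicate k c) \<star> d (Z (replicate (Suc M' - k) c))))
      = (\<Sum>k\<le>M'. scal ((-1) ^ k) (Z (replicate k c) \<star> d (Z (replicate (M' - k) c @ [c]))))"
    by (rule sum.cong) (simp_all add: rep_shift[of _ _ _ "[]", simplified])
  also have "\<dots> = scal ((-1) ^ M') (phi (Z (replicate M' c)) (d (Z [c])))"
    by (rule lemL) (use assms in auto)
  also have "\<dots> = scal ((-1) ^ M') (Z (c # replicate M' c))"
    using assms by (simp add: d_single phi_Zc Z_harm_Z Z_Cons_conc[symmetric] del: hw.simps)
  finally have S: "(\<Sum>k\<le>M'. scal ((-1) ^ k) (Z (replicate k c) \<star> d (Z (replicate (Suc M' - k) c))))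
      = scal ((-1) ^ M') (Z (c # replicate M' c))" .
  have P: "pos (c # replicate M' c)" using assms by simp
  show ?thesis
    unfolding Suc sum.atMost_Suc S
    using P by (simp add: d_Nil Z_harm_Z scal_uminus_left del: hw.simps)
qed



lemma telescope:
  "(\<Sum>l\<le>n. scal ((-1) ^ l) (g l + (if l = 0 then 0 else g (l - 1)))) = scal ((-1) ^ n) (g n)"
proof (induction n)
  case 0 then show ?case by simp
next
  case (Suc n)
  show ?case
    unfolding sum.atMost_Suc Suc.IH
    by (simp add: scal_add scal_uminus_left)
qed

lemma star:
  assumes a: "0 < a" and b: "0 < b" and W: "pos W"
  shows "phi (Z W) (d (Z (b # replicate n a)))
       = (\<Sum>l\<le>n. scal ((-1) ^ l) (Z (replicate l a @ b # W) \<star> d (Z (replicate (n - l) a))))"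
proof -
  define Q where "Q = phi (Z W) (d (Z (b # replicate n a)))"
  define g where "g l = phi (Z (replicate l a @ b # W)) (d (Z (replicate (n - l) a)))" for l
  have T: "Z (replicate l a @ b # W) \<star> d (Z (replicate (n - l) a))
      = (if l = 0 then Q else 0) + (g l + (if l = 0 then 0 else g (l - 1)))" if "l \<le> n" for l
  proof (cases l)
    case 0
    have "Z (b # W) \<star> d (Z (replicate n a)) = phi (Z W) (nu b (d (Z (replicate n a)))) + phi (Z (b # W)) (d (Z (replicate n a)))"
      by (rule G_rule[OF b W])
    also have "\<dots> = Q + g 0"
      unfolding Q_def g_def using a b by (simp add: dphi)
    finally show ?thesis using 0 by simp
  next
    case (Suc l')
    let ?W' = "replicate l' a @ b # W"
    have pW': "pos ?W'" using a b W by auto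
    have e1: "replicate l a @ b # W = a # ?W'" using Suc by simp
    have e2: "a # replicate (n - l) a = replicate (n - l') a"
      using Suc that by (simp add: Suc_diff_Suc[symmetric])
    have "Z (a # ?W') \<star> d (Z (replicate (n - l) a)) = phi (Z ?W') (nu a (d (Z (replicate (n - l) a)))) + phi (Z (a # ?W')) (d (Z (replicate (n - l) a)))"
      by (rule G_rule[OF a pW'])
    also have "\<dots> = phi (Z ?W') (d (Z (a # replicate (n - l) a))) + g l"
      unfolding g_def e1 using a by (simp add: dphi)
    also have "\<dots> = g l' + g l"
      unfolding g_def e2 by simp
    finally show ?thesis using Suc e1 by (simp add: add.commute)
  qed
  have gn: "g n = 0"
    unfolding g_def using phi_rep[of _ 0] by (simp add: d_word_def Z_def)
  have "(\<Sum>l\<le>n. scal ((-1) ^ l) (Z (replicate l a @ b # W) \<star> d (Z (replicate (n - l) a))))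
      = (\<Sum>l\<le>n. scal ((-1) ^ l) (if l = 0 then Q else 0) + scal ((-1) ^ l) (g l + (if l = 0 then 0 else g (l - 1))))"
    by (rule sum.cong) (simp_all add: T scal_add)
  also have "\<dots> = (\<Sum>l\<le>n. scal ((-1) ^ l) (if l = 0 then Q else 0)) + scal ((-1) ^ n) (g n)"
    by (simp only: sum.distrib telescope)
  also have "(\<Sum>l\<le>n. scal ((-1) ^ l) (if l = 0 then Q else 0)) = (\<Sum>l\<le>n. if l = 0 then Q else 0)"
    by (rule sum.cong) auto
  also have "\<dots> = Q" by simp
  also have "Q + scal ((-1) ^ n) (g n) = Q" by (simp add: gn)
  finally show ?thesis unfolding Q_def ..
qed

lemma sum_swap_tri:
  fixes g :: "nat \<Rightarrow> nat \<Rightarrow> hpoly" and m :: nat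
  shows "(\<Sum>k\<le>m. \<Sum>j\<le>m - k. g k j) = (\<Sum>j\<le>m. \<Sum>k\<le>m - j. g k j)"
proof -
  have A: "{j \<in> {..m}. k + j \<le> m} = {..m - k}" if "k \<le> m" for k using that by auto
  have B: "{k \<in> {..m}. k + j \<le> m} = {..m - j}" if "j \<le> m" for j using that by auto
  have "(\<Sum>k\<le>m. \<Sum>j\<le>m - k. g k j) = (\<Sum>k\<le>m. \<Sum>j\<in>{j \<in> {..m}. k + j \<le> m}. g k j)"
    by (rule sum.cong) (simp_all add: A[simplified])
  also have "\<dots> = (\<Sum>j\<le>m. \<Sum>k\<in>{k \<in> {..m}. k + j \<le> m}. g k j)"
    by (rule sum.swap_restrict) simp_all
  also have "\<dots> = (\<Sum>j\<le>m. \<Sum>k\<le>m - j. g k j)"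
    by (rule sum.cong) (simp_all add: B[simplified])
  finally show ?thesis .
qed

lemma uniq:
  assumes E: "\<And>m. (\<Sum>k\<le>m. scal ((-1) ^ k) (Z (replicate k c) \<star> XX (m - k)))
                 = (\<Sum>k\<le>m. scal ((-1) ^ k) (Z (replicate k c) \<star> YY (m - k)))"
    and NX: "\<And>m. nrm (XX m) = XX m" and NY: "\<And>m. nrm (YY m) = YY m"
  shows "XX m = YY m"
proof (induction m rule: less_induct)
  case (less m)
  show ?case
  proof (cases m)
    case 0
    then show ?thesis using E[of 0] NX[of 0] NY[of 0] by (simp add: harm_Nil_left)
  next
    case (Suc m')
    have tails: "(\<Sum>i\<le>m'. scal ((-1) ^ Suc i) (Z (replicate (Suc i) c) \<star> XX (Suc m' - Suc i)))
        = (\<Sum>i\<le>m'. scal ((-1) ^ Suc i) (Z (replicate (Suc i) c) \<star> YY (Suc m' - Suc i)))"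
    proof (rule sum.cong)
      fix i assume "i \<in> {..m'}"
      then have "XX (Suc m' - Suc i) = YY (Suc m' - Suc i)" using Suc by (intro less.IH) auto
      then show "scal ((-1) ^ Suc i) (Z (replicate (Suc i) c) \<star> XX (Suc m' - Suc i))
        = scal ((-1) ^ Suc i) (Z (replicate (Suc i) c) \<star> YY (Suc m' - Suc i))" by simp
    qed simp
    have "scal ((-1) ^ 0) (Z (replicate 0 c) \<star> XX (Suc m' - 0)) = scal ((-1) ^ 0) (Z (replicate 0 c) \<star> YY (Suc m' - 0))"
      using E[of "Suc m'"] unfolding sum.atMost_Suc_shift tails by simp
    then show ?thesis using Suc NX[of m] NY[of m] by (simp add: harm_Nil_left)
  qed
qed



theorem proposition2p4:
  fixes a b c m n :: nat
  assumes "a \<ge> 1" and "b \<ge> 1" and "c \<ge> 1"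
  shows "d (Z (replicate m c @ [b] @ replicate n a)) =
    (\<Sum>k\<le>m. \<Sum>l\<le>n. scal ((-1) ^ (k + l))
       (Z (replicate l a @ [b] @ replicate k c) \<star> d (Z (replicate (m - k) c))
          \<star> d (Z (replicate (n - l) a))))"
proof -
  have a: "0 < a" and b: "0 < b" and c: "0 < c" using assms by auto
  define u where "u = b # replicate n a"
  have pu: "pos u" "u \<noteq> []" using a b by (auto simp: u_def)
  define T where "T m = d (Z (replicate m c @ u))" for m
  define D where "D j = d (Z (replicate j c))" for j
  define E where "E j = d (Z (replicate j a))" for j
  define H where "H k = scal ((-1) ^ k) (\<Sum>l\<le>n. scal ((-1) ^ l) (Z (replicate l a @ b # replicate k c) \<star> E (n - l)))" for k
  define YY where "YY m = (\<Sum>j\<le>m. D (m - j) \<star> H j)" for m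
  have Hphi: "H k = scal ((-1) ^ k) (phi (Z (replicate k c)) (d (Z u)))" for k
    unfolding H_def E_def u_def using star[OF a b, of "replicate k c" n] c by simp
  have nrmH: "nrm (H k) = H k" for k
    unfolding H_def using islin_nrm
    by (simp add: islin_sum islin_def nrm_harm[of "Z _"])
  have LT: "(\<Sum>k\<le>m. scal ((-1) ^ k) (Z (replicate k c) \<star> T (m - k))) = H m" for m
    unfolding T_def Hphi by (rule lemL[OF c pu])
  have LY: "(\<Sum>k\<le>m. scal ((-1) ^ k) (Z (replicate k c) \<star> YY (m - k))) = H m" for m
  proof -
    have "(\<Sum>k\<le>m. scal ((-1) ^ k) (Z (replicate k c) \<star> YY (m - k)))
        = (\<Sum>k\<le>m. \<Sum>j\<le>m - k. scal ((-1) ^ k) (Z (replicate k c) \<star> D (m - j - k)) \<star> H j)"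
      unfolding YY_def
      by (simp add: harm_sum2 scal_sum harm_scal1 harm_assoc add.commute)
    also have "\<dots> = (\<Sum>j\<le>m. \<Sum>k\<le>m - j. scal ((-1) ^ k) (Z (replicate k c) \<star> D (m - j - k)) \<star> H j)"
      by (rule sum_swap_tri)
    also have "\<dots> = (\<Sum>j\<le>m. (\<Sum>k\<le>m - j. scal ((-1) ^ k) (Z (replicate k c) \<star> D (m - j - k))) \<star> H j)"
      by (simp add: harm_sum1)
    also have "\<dots> = (\<Sum>j\<le>m. (if m - j = 0 then Z [] else 0) \<star> H j)"
      unfolding D_def by (simp only: F1[OF c])
    also have "\<dots> = (\<Sum>j\<le>m. if j = m then H j else 0)"
      by (rule sum.cong) (auto simp: harm_Nil_left nrmH)
    also have "\<dots> = H m" by simp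
    finally show ?thesis .
  qed
  have TY: "T m = YY m" for m
  proof (rule uniq[of c T YY])
    show "(\<Sum>k\<le>m. scal ((-1) ^ k) (Z (replicate k c) \<star> T (m - k))) = (\<Sum>k\<le>m. scal ((-1) ^ k) (Z (replicate k c) \<star> YY (m - k)))" for m
      by (simp only: LT LY)
    show "nrm (T m) = T m" for m
      unfolding T_def using pu c by (intro nrm_d) auto
    show "nrm (YY m) = YY m" for m
      unfolding YY_def using islin_nrm by (simp add: islin_sum nrm_harm)
  qed
  have lhs: "d (Z (replicate m c @ [b] @ replicate n a)) = T m"
    by (simp add: T_def u_def)
  have rhs: "(\<Sum>k\<le>m. \<Sum>l\<le>n. scal ((-1) ^ (k + l))
       (Z (replicate l a @ [b] @ replicate k c) \<star> d (Z (replicate (m - k) c))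
          \<star> d (Z (replicate (n - l) a)))) = YY m"
    unfolding YY_def H_def D_def E_def
    by (simp add: harm_sum2 harm_scal2 scal_sum power_add harm_assoc[symmetric] harm_comm[of "d (Z (replicate _ c))" "Z _"])
  show ?thesis unfolding lhs rhs TY ..
qed


end
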